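(* Let $V_\theta$ be a real vector space of finite dimension $D\ge1$ and let $M\subset V_\theta\times[0,1]$ be a dichotomous item response hypersurface with associated function $f:V_\theta\to[0,1]$. Then for every $w\in V_\theta$ there exists an affine hyperplane $H_w\subset V_\theta$ (of dimension $D-1$) with $w\in H_w$ such that the restriction of $f$ to $H_w$ is constant.
   Context: A dichotomous item response hypersurface (IRHS) is a $D=\dim V_\theta$ dimensional smooth submanifold $M$ of $V_\theta\times[0,1]$ such that for any two vectors $v,w\in V_\theta$, the intersection of $(w+\mathbb{R}\cdot v)\times[0,1]$ with $M$ is the graph of a monotonic function $w+\mathbb{R}\cdot v\to[0,1]$, where $w+\mathbb{R}\cdot v=\{w+\lambda v:\lambda\in\mathbb{R}\}$. A function $g:w+\mathbb{R}\cdot v\to[0,1]$ is monotonic if either $g(w+\lambda v)\le g(w+\mu v)$ for all $\lambda\le\mu$, or $g(w+\lambda v)\ge g(w+\mu v)$ for all $\lambda\le\mu$. Taking $v=0$ shows $M$ is the graph of a function $f:V_\theta\to[0,1]$, the associated function. *)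

theory Defs
  imports "HOL-Analysis.Analysis"
begin

fun Ck_on :: "nat \<Rightarrow> 'a::euclidean_space set \<Rightarrow> ('a \<Rightarrow> 'b::real_normed_vector) \<Rightarrow> bool" where
  "Ck_on 0 S f = continuous_on S f"
| "Ck_on (Suc k) S f =
     (f differentiable_on S \<and>
      (\<forall>i\<in>Basis. Ck_on k S (\<lambda>x. frechet_derivative f (at x) i)))"

definition smooth_on :: "'a::euclidean_space set \<Rightarrow> ('a \<Rightarrow> 'b::real_normed_vector) \<Rightarrow> bool" where
  "smooth_on S f \<longleftrightarrow> (\<forall>k. Ck_on k S f)"

text \<open>Smooth embedded submanifold of dimension d of a Euclidean space E
  (slice-chart definition): around every point of M there is a smooth
  diffeomorphism of open sets straightening M to a d-dimensional linear subspace.\<close>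
definition smooth_submanifold :: "nat \<Rightarrow> 'e::euclidean_space set \<Rightarrow> bool" where
  "smooth_submanifold d M \<longleftrightarrow>
     (\<forall>p\<in>M. \<exists>U W (\<phi>::'e \<Rightarrow> 'e) \<psi> L.
        open U \<and> p \<in> U \<and> open W \<and>
        \<phi> ` U = W \<and> \<psi> ` W = U \<and>
        (\<forall>x\<in>U. \<psi> (\<phi> x) = x) \<and> (\<forall>y\<in>W. \<phi> (\<psi> y) = y) \<and>
        smooth_on U \<phi> \<and> smooth_on W \<psi> \<and>
        subspace L \<and> dim L = d \<and>
        \<phi> ` (M \<inter> U) = W \<inter> L)"

definition monotonic_on_line :: "'a::real_vector \<Rightarrow> 'a \<Rightarrow> ('a \<Rightarrow> real) \<Rightarrow> bool" where
  "monotonic_on_line w v g \<longleftrightarrow>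
     (\<forall>s t. s \<le> t \<longrightarrow> g (w + s *\<^sub>R v) \<le> g (w + t *\<^sub>R v)) \<or>
     (\<forall>s t. s \<le> t \<longrightarrow> g (w + s *\<^sub>R v) \<ge> g (w + t *\<^sub>R v))"

definition line :: "'a::real_vector \<Rightarrow> 'a \<Rightarrow> 'a set" where
  "line w v = {w + s *\<^sub>R v | s. True}"

definition IRHS :: "('a::euclidean_space \<times> real) set \<Rightarrow> bool" where
  "IRHS M \<longleftrightarrow>
     M \<subseteq> UNIV \<times> {0..1} \<and>
     smooth_submanifold DIM('a) M \<and>
     (\<forall>v w. \<exists>g. (\<forall>x\<in>line w v. g x \<in> {0..1}) \<and> monotonic_on_line w v g \<and>
        M \<inter> (line w v \<times> {0..1}) = {(x, g x) | x. x \<in> line w v})"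

end

theory Submission
  imports Defs "HOL-Homology.Invariance_of_Domain"
begin

lemma graph_open_vimage:
  fixes M :: "('a::euclidean_space \<times> real) set" and f :: "'a \<Rightarrow> real"
  assumes sm: "smooth_submanifold DIM('a) M"
    and Mf: "M = {(x, f x) | x. True}"
    and Q: "open Q"
  shows "open (f -` Q)"
proof (rule open_subopen[THEN iffD2], intro ballI)
  fix x0 assume x0: "x0 \<in> f -` Q"
  define p where "p = (x0, f x0)"
  have pM: "p \<in> M" using Mf p_def by auto
  then obtain U W and \<phi> :: "'a \<times> real \<Rightarrow> 'a \<times> real" and \<psi> L where
    U: "open U" "p \<in> U" and W: "open W" and im1: "\<phi> ` U = W" and im2: "\<psi> ` W = U"
    and inv1: "\<forall>x\<in>U. \<psi> (\<phi> x) = x" and inv2: "\<forall>y\<in>W. \<phi> (\<psi> y) = y"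
    and smp: "smooth_on W \<psi>" and L: "subspace L" "dim L = DIM('a)"
    and sl: "\<phi> ` (M \<inter> U) = W \<inter> L"
    using sm unfolding smooth_submanifold_def by metis
  have cpsi: "continuous_on W \<psi>"
    using smp unfolding smooth_on_def by (metis Ck_on.simps(1))
  define S0 where "S0 = (W \<inter> \<psi> -` (snd -` Q)) \<inter> L"
  have "open (W \<inter> \<psi> -` (snd -` Q))"
    by (rule continuous_open_preimage[OF cpsi W]) (simp add: Q open_vimage_snd)
  hence ope: "openin (top_of_set L) S0"
    unfolding S0_def by (metis inf_commute openin_open_Int)
  have psiM: "\<psi> y \<in> M" if "y \<in> W \<inter> L" for y
  proof -
    from that sl obtain m where "m \<in> M \<inter> U" "y = \<phi> m" by (metis imageE)
    thus ?thesis using inv1 by auto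
  qed
  have psig: "\<psi> y = (fst (\<psi> y), f (fst (\<psi> y)))" if "y \<in> W \<inter> L" for y
    using psiM[OF that] Mf by auto
  define g where "g = (\<lambda>y. fst (\<psi> y))"
  have "openin (top_of_set (UNIV::'a set)) (g ` S0)"
  proof (rule invariance_of_domain_subspaces[OF ope L(1)])
    show "subspace (UNIV::'a set)" by simp
    show "dim (UNIV::'a set) \<le> dim L" using L by simp
    show "continuous_on S0 g" unfolding g_def
      by (rule continuous_on_fst, rule continuous_on_subset[OF cpsi]) (auto simp: S0_def)
    show "g \<in> S0 \<rightarrow> UNIV" by simp
    show "inj_on g S0"
    proof (rule inj_onI)
      fix y1 y2 assume y: "y1 \<in> S0" "y2 \<in> S0" "g y1 = g y2"
      hence "\<psi> y1 = \<psi> y2" using psig[of y1] psig[of y2] by (auto simp: S0_def g_def)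
      thus "y1 = y2" using inv2 y by (metis IntE S0_def)
    qed
  qed
  hence opg: "open (g ` S0)" by simp
  have y0: "\<phi> p \<in> S0"
  proof -
    have "\<phi> p \<in> W \<inter> L" using sl pM U by blast
    moreover have "\<psi> (\<phi> p) = p" using inv1 U by auto
    ultimately show ?thesis using x0 unfolding S0_def p_def by auto
  qed
  have "g (\<phi> p) = x0" using inv1 U by (simp add: g_def p_def)
  hence "x0 \<in> g ` S0" using y0 by force
  moreover have "g ` S0 \<subseteq> f -` Q"
  proof
    fix x assume "x \<in> g ` S0"
    then obtain y where y: "y \<in> S0" "x = g y" by auto
    hence "snd (\<psi> y) \<in> Q" by (auto simp: S0_def)
    moreover have "y \<in> W \<inter> L" using y(1) by (auto simp: S0_def)
    hence "snd (\<psi> y) = f x" using psig[of y] y(2) unfolding g_def by (metis snd_conv)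
    ultimately show "x \<in> f -` Q" by simp
  qed
  ultimately show "\<exists>T. open T \<and> x0 \<in> T \<and> T \<subseteq> f -` Q" using opg by blast
qed

lemma cone_sep:
  fixes P Q :: "'a::euclidean_space set"
  assumes "convex P" "convex Q" "P \<noteq> {}" "Q \<noteq> {}" "P \<inter> Q = {}"
    and cP: "\<And>t y. t > 0 \<Longrightarrow> y \<in> P \<Longrightarrow> t *\<^sub>R y \<in> P"
    and cQ: "\<And>t y. t > 0 \<Longrightarrow> y \<in> Q \<Longrightarrow> t *\<^sub>R y \<in> Q"
  shows "\<exists>a. a \<noteq> 0 \<and> (\<forall>y\<in>P. a \<bullet> y \<le> 0) \<and> (\<forall>y\<in>Q. a \<bullet> y \<ge> 0)"
proof -
  obtain a b where ab: "a \<noteq> 0" "\<forall>x\<in>P. a \<bullet> x \<le> b" "\<forall>x\<in>Q. a \<bullet> x \<ge> b"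
    using separating_hyperplane_sets[OF assms(1-5)] by blast
  have "a \<bullet> y \<le> 0" if y: "y \<in> P" for y
  proof (rule ccontr)
    assume n: "\<not> a \<bullet> y \<le> 0"
    define t where "t = (\<bar>b\<bar> + 1) / (a \<bullet> y)"
    have t: "t > 0" using n by (simp add: t_def)
    have "a \<bullet> (t *\<^sub>R y) = \<bar>b\<bar> + 1" using n by (simp add: t_def)
    moreover have "a \<bullet> (t *\<^sub>R y) \<le> b" using ab(2) cP[OF t y] by blast
    ultimately show False by linarith
  qed
  moreover have "a \<bullet> y \<ge> 0" if y: "y \<in> Q" for y
  proof (rule ccontr)
    assume n: "\<not> a \<bullet> y \<ge> 0"
    define t where "t = (\<bar>b\<bar> + 1) / (- (a \<bullet> y))"
    have "- (a \<bullet> y) > 0" using n by simp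
    hence t: "t > 0" unfolding t_def by (intro divide_pos_pos) auto
    have "a \<bullet> (t *\<^sub>R y) = - (\<bar>b\<bar> + 1)" using n by (simp add: t_def)
    moreover have "a \<bullet> (t *\<^sub>R y) \<ge> b" using ab(3) cQ[OF t y] by blast
    ultimately show False by linarith
  qed
  ultimately show ?thesis using ab(1) by blast
qed

lemma mono_line_cases:
  fixes f :: "'a::real_vector \<Rightarrow> real"
  assumes "monotonic_on_line w v f"
  shows "(\<forall>s t. s \<le> t \<longrightarrow> f (w + s *\<^sub>R v) \<le> f (w + t *\<^sub>R v)) \<or>
         (\<forall>s t. s \<le> t \<longrightarrow> f (w + s *\<^sub>R v) \<ge> f (w + t *\<^sub>R v))"
  using assms unfolding monotonic_on_line_def by blast

lemma core:
  fixes f :: "'a::euclidean_space \<Rightarrow> real"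
  assumes mono: "\<And>w v. monotonic_on_line w v f"
    and oA: "open {x. f x < f w}" and oB: "open {x. f x > f w}"
  shows "\<exists>a. a \<noteq> 0 \<and> (\<forall>x. a \<bullet> x = a \<bullet> w \<longrightarrow> f x = f w)"
proof -
  define c where "c = f w"
  define A where "A = {x. f x < c}"
  define B where "B = {x. f x > c}"
  define CA where "CA = {t *\<^sub>R (x - w) | t x. t > 0 \<and> x \<in> A}"
  define CB where "CB = {t *\<^sub>R (x - w) | t x. t > 0 \<and> x \<in> B}"
  have cvA: "convex A" unfolding convex_def
  proof (intro ballI allI impI)
    fix x y and u v :: real assume xy: "x \<in> A" "y \<in> A" and uv: "0 \<le> u" "0 \<le> v" "u + v = 1"
    have e: "u *\<^sub>R x + v *\<^sub>R y = x + v *\<^sub>R (y - x)"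
      using uv by (simp add: algebra_simps) (metis add_diff_cancel_right' scaleR_left.add scaleR_one)
    have "v \<le> 1" using uv by simp
    from mono_line_cases[OF mono[of x "y - x"]]
    have "f (x + v *\<^sub>R (y - x)) \<le> max (f x) (f y)"
    proof
      assume "\<forall>s t. s \<le> t \<longrightarrow> f (x + s *\<^sub>R (y - x)) \<le> f (x + t *\<^sub>R (y - x))"
      from this[rule_format, OF \<open>v \<le> 1\<close>] show ?thesis by simp
    next
      assume "\<forall>s t. s \<le> t \<longrightarrow> f (x + s *\<^sub>R (y - x)) \<ge> f (x + t *\<^sub>R (y - x))"
      from this[rule_format, OF \<open>0 \<le> v\<close>] show ?thesis by simp
    qed
    thus "u *\<^sub>R x + v *\<^sub>R y \<in> A" using xy e by (simp add: A_def)
  qed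
  have cvB: "convex B" unfolding convex_def
  proof (intro ballI allI impI)
    fix x y and u v :: real assume xy: "x \<in> B" "y \<in> B" and uv: "0 \<le> u" "0 \<le> v" "u + v = 1"
    have e: "u *\<^sub>R x + v *\<^sub>R y = x + v *\<^sub>R (y - x)"
      using uv by (simp add: algebra_simps) (metis add_diff_cancel_right' scaleR_left.add scaleR_one)
    have "v \<le> 1" using uv by simp
    from mono_line_cases[OF mono[of x "y - x"]]
    have "f (x + v *\<^sub>R (y - x)) \<ge> min (f x) (f y)"
    proof
      assume "\<forall>s t. s \<le> t \<longrightarrow> f (x + s *\<^sub>R (y - x)) \<le> f (x + t *\<^sub>R (y - x))"
      from this[rule_format, OF \<open>0 \<le> v\<close>] show ?thesis by simp
    next
      assume "\<forall>s t. s \<le> t \<longrightarrow> f (x + s *\<^sub>R (y - x)) \<ge> f (x + t *\<^sub>R (y - x))"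
      from this[rule_format, OF \<open>v \<le> 1\<close>] show ?thesis by simp
    qed
    thus "u *\<^sub>R x + v *\<^sub>R y \<in> B" using xy e by (simp add: B_def)
  qed
  have cone_cvx: "convex {t *\<^sub>R (x - w) | t x. t > 0 \<and> x \<in> S}" if cS: "convex S" for S
    unfolding convex_def
  proof (intro ballI allI impI)
    fix p q and u v :: real
    assume p: "p \<in> {t *\<^sub>R (x - w) | t x. t > 0 \<and> x \<in> S}"
      and q: "q \<in> {t *\<^sub>R (x - w) | t x. t > 0 \<and> x \<in> S}" and uv: "0 \<le> u" "0 \<le> v" "u + v = 1"
    obtain t1 x1 where 1: "p = t1 *\<^sub>R (x1 - w)" "t1 > 0" "x1 \<in> S" using p by blast
    obtain t2 x2 where 2: "q = t2 *\<^sub>R (x2 - w)" "t2 > 0" "x2 \<in> S" using q by blast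
    define T where "T = u * t1 + v * t2"
    have T: "T > 0" unfolding T_def using uv 1 2
      by (smt (verit) mult_nonneg_nonneg mult_pos_pos)
    define x where "x = (u * t1 / T) *\<^sub>R x1 + (v * t2 / T) *\<^sub>R x2"
    have "x \<in> S" unfolding x_def
      by (rule convexD[OF cS 1(3) 2(3)]) (use uv 1 2 T in \<open>auto simp: T_def add_divide_distrib[symmetric]\<close>)
    moreover have "u *\<^sub>R p + v *\<^sub>R q = T *\<^sub>R (x - w)"
    proof -
      have "T *\<^sub>R x = (u * t1) *\<^sub>R x1 + (v * t2) *\<^sub>R x2"
        using T by (simp add: x_def scaleR_add_right)
      thus ?thesis unfolding 1 2 by (simp add: algebra_simps T_def)
    qed
    ultimately show "u *\<^sub>R p + v *\<^sub>R q \<in> {t *\<^sub>R (x - w) | t x. t > 0 \<and> x \<in> S}"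
      using T by blast
  qed
  have cvCA: "convex CA" unfolding CA_def by (rule cone_cvx[OF cvA])
  have cvCB: "convex CB" unfolding CB_def by (rule cone_cvx[OF cvB])
  have scale: "t *\<^sub>R y \<in> {t *\<^sub>R (x - w) | t x. t > 0 \<and> x \<in> S}"
    if tp: "t > 0" and yS: "y \<in> {t *\<^sub>R (x - w) | t x. t > 0 \<and> x \<in> S}" for t y S
  proof -
    obtain s x where "y = s *\<^sub>R (x - w)" "s > 0" "x \<in> S" using yS by blast
    hence "t *\<^sub>R y = (t * s) *\<^sub>R (x - w)" "t * s > 0" using tp by auto
    thus ?thesis using \<open>x \<in> S\<close> by blast
  qed
  have rays: "\<not> (h s < h 0 \<and> h t > h 0)" "\<not> (h s < h 0 \<and> h r < h 0)"
    "\<not> (h s > h 0 \<and> h r > h 0)"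
    if "(\<forall>s t. s \<le> t \<longrightarrow> h s \<le> h t) \<or> (\<forall>s t. s \<le> t \<longrightarrow> h s \<ge> h t)"
       "s > 0" "t > 0" "r < 0" for h :: "real \<Rightarrow> real" and s t r
  proof -
    from that(1) have "(h 0 \<le> h s \<and> h r \<le> h 0) \<or> (h t \<le> h 0 \<and> h 0 \<le> h r \<and> h s \<le> h 0)"
    proof
      assume i: "\<forall>s t. s \<le> t \<longrightarrow> h s \<le> h t"
      have "h 0 \<le> h s" using i that(2) by simp
      moreover have "h r \<le> h 0" using i that(4) by simp
      ultimately show ?thesis by blast
    next
      assume i: "\<forall>s t. s \<le> t \<longrightarrow> h s \<ge> h t"
      have "h t \<le> h 0" using i that(3) by simp
      moreover have "h 0 \<le> h r" using i that(4) by simp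
      moreover have "h s \<le> h 0" using i that(2) by simp
      ultimately show ?thesis by blast
    qed
    thus "\<not> (h s < h 0 \<and> h t > h 0)" "\<not> (h s < h 0 \<and> h r < h 0)"
      "\<not> (h s > h 0 \<and> h r > h 0)" by auto
  qed
  have hw: "f (w + 0 *\<^sub>R d) = c" for d by (simp add: c_def)
  have monoh: "(\<forall>s t. s \<le> t \<longrightarrow> (\<lambda>s. f (w + s *\<^sub>R d)) s \<le> (\<lambda>s. f (w + s *\<^sub>R d)) t) \<or>
      (\<forall>s t. s \<le> t \<longrightarrow> (\<lambda>s. f (w + s *\<^sub>R d)) s \<ge> (\<lambda>s. f (w + s *\<^sub>R d)) t)" for d
    using mono_line_cases[OF mono[of w d]] by simp
  have lin: "x2 = w + (t1 / t2) *\<^sub>R (x1 - w)"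
    if "t1 *\<^sub>R (x1 - w) = t2 *\<^sub>R (x2 - w)" "t2 > 0" for t1 t2 x1 x2
  proof -
    have "x2 - w = (1 / t2) *\<^sub>R (t2 *\<^sub>R (x2 - w))" using that(2) by simp
    also have "\<dots> = (1 / t2) *\<^sub>R (t1 *\<^sub>R (x1 - w))" by (simp only: that(1))
    also have "\<dots> = (t1 / t2) *\<^sub>R (x1 - w)" by simp
    finally show ?thesis by (metis add.commute diff_add_cancel)
  qed
  have d1: "CA \<inter> CB = {}"
  proof (rule ccontr)
    assume "CA \<inter> CB \<noteq> {}"
    then obtain t1 x1 t2 x2 where e: "t1 *\<^sub>R (x1 - w) = t2 *\<^sub>R (x2 - w)" "t1 > 0" "x1 \<in> A"
      "t2 > 0" "x2 \<in> B" unfolding CA_def CB_def by blast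
    have "x2 = w + (t1 / t2) *\<^sub>R (x1 - w)" using lin e by blast
    moreover have "x1 = w + 1 *\<^sub>R (x1 - w)" by simp
    ultimately show False
      using rays(1)[OF monoh[of "x1 - w"], of 1 "t1 / t2" "-1"] e hw[of "x1 - w"]
      by (simp add: A_def B_def c_def)
  qed
  have d2: "CA \<inter> uminus ` CA = {}"
  proof (rule ccontr)
    assume "CA \<inter> uminus ` CA \<noteq> {}"
    then obtain t1 x1 t2 x2 where e: "(- t1) *\<^sub>R (x1 - w) = t2 *\<^sub>R (x2 - w)" "t1 > 0" "x1 \<in> A"
      "t2 > 0" "x2 \<in> A" unfolding CA_def by auto
    have "x2 = w + (- t1 / t2) *\<^sub>R (x1 - w)" using lin[OF e(1) e(4)] by simp
    moreover have "x1 = w + 1 *\<^sub>R (x1 - w)" by simp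
    moreover have "- t1 / t2 < 0" using e by (simp add: divide_pos_pos)
    ultimately show False
      using rays(2)[OF monoh[of "x1 - w"], of 1 1 "- t1 / t2"] e hw[of "x1 - w"]
      by (simp add: A_def B_def c_def)
  qed
  have d3: "uminus ` CB \<inter> CB = {}"
  proof (rule ccontr)
    assume "uminus ` CB \<inter> CB \<noteq> {}"
    then obtain t1 x1 t2 x2 where e: "(- t1) *\<^sub>R (x1 - w) = t2 *\<^sub>R (x2 - w)" "t1 > 0" "x1 \<in> B"
      "t2 > 0" "x2 \<in> B" unfolding CB_def by auto
    have "x2 = w + (- t1 / t2) *\<^sub>R (x1 - w)" using lin[OF e(1) e(4)] by simp
    moreover have "x1 = w + 1 *\<^sub>R (x1 - w)" by simp
    moreover have "- t1 / t2 < 0" using e by (simp add: divide_pos_pos)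
    ultimately show False
      using rays(3)[OF monoh[of "x1 - w"], of 1 1 "- t1 / t2"] e hw[of "x1 - w"]
      by (simp add: A_def B_def c_def)
  qed
  have sA: "t *\<^sub>R y \<in> CA" if "t > 0" "y \<in> CA" for t y using scale that unfolding CA_def by blast
  have sB: "t *\<^sub>R y \<in> CB" if "t > 0" "y \<in> CB" for t y using scale that unfolding CB_def by blast
  have sA': "t *\<^sub>R y \<in> uminus ` CA" if tp: "t > 0" and yy: "y \<in> uminus ` CA" for t y
  proof -
    obtain z where z: "z \<in> CA" "y = - z" using yy by blast
    hence "t *\<^sub>R y = - (t *\<^sub>R z)" by simp
    moreover have "t *\<^sub>R z \<in> CA" using sA[OF tp z(1)] .
    ultimately show ?thesis by blast
  qed
  have sB': "t *\<^sub>R y \<in> uminus ` CB" if tp: "t > 0" and yy: "y \<in> uminus ` CB" for t y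
  proof -
    obtain z where z: "z \<in> CB" "y = - z" using yy by blast
    hence "t *\<^sub>R y = - (t *\<^sub>R z)" by simp
    moreover have "t *\<^sub>R z \<in> CB" using sB[OF tp z(1)] .
    ultimately show ?thesis by blast
  qed
  obtain a :: 'a where a: "a \<noteq> 0" "\<forall>y\<in>CA. a \<bullet> y \<le> 0" "\<forall>y\<in>CB. a \<bullet> y \<ge> 0"
  proof (cases "CA = {}"; cases "CB = {}")
    assume "CA = {}" "CB = {}"
    moreover obtain b :: 'a where "b \<in> Basis" by (meson ex_in_conv nonempty_Basis)
    ultimately show ?thesis using that[of b] by (auto simp: nonzero_Basis)
  next
    assume "CA = {}" "CB \<noteq> {}"
    then obtain a where "a \<noteq> 0" "\<forall>y\<in>uminus ` CB. a \<bullet> y \<le> 0" "\<forall>y\<in>CB. a \<bullet> y \<ge> 0"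
      using cone_sep[OF convex_negations[OF cvCB] cvCB _ _ d3 sB' sB] by blast
    thus ?thesis using that \<open>CA = {}\<close> by blast
  next
    assume "CA \<noteq> {}" "CB = {}"
    then obtain a where "a \<noteq> 0" "\<forall>y\<in>CA. a \<bullet> y \<le> 0" "\<forall>y\<in>uminus ` CA. a \<bullet> y \<ge> 0"
      using cone_sep[OF cvCA convex_negations[OF cvCA] _ _ d2 sA sA'] by blast
    thus ?thesis using that \<open>CB = {}\<close> by blast
  next
    assume "CA \<noteq> {}" "CB \<noteq> {}"
    thus ?thesis using cone_sep[OF cvCA cvCB _ _ d1 sA sB] that by blast
  qed
  have na: "norm a > 0" using a(1) by simp
  have "f x = f w" if ax: "a \<bullet> x = a \<bullet> w" for x
  proof (rule ccontr)
    assume ne: "f x \<noteq> f w"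
    show False
    proof (cases "f x < c")
      case True
      hence "x \<in> A" by (simp add: A_def)
      moreover have "open A" using oA by (simp add: A_def c_def)
      ultimately obtain e where e: "e > 0" "ball x e \<subseteq> A" using open_contains_ball by blast
      define x' where "x' = x + (e / 2 / norm a) *\<^sub>R a"
      have "dist x x' < e" using e na by (simp add: x'_def dist_norm)
      hence "x' \<in> A" using e by auto
      hence "1 *\<^sub>R (x' - w) = 1 *\<^sub>R (x' - w) \<and> (0::real) < 1 \<and> x' \<in> A" by simp
      hence "1 *\<^sub>R (x' - w) \<in> CA" unfolding CA_def by blast
      hence "a \<bullet> (x' - w) \<le> 0" using a by simp
      moreover have "a \<bullet> (x' - w) = (e / 2 / norm a) * (a \<bullet> a)"
        using ax by (simp add: x'_def inner_diff_right inner_add_right)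
      moreover have "(e / 2 / norm a) * (a \<bullet> a) > 0" using e na a(1) by simp
      ultimately show False by linarith
    next
      case False
      hence "f x > c" using ne by (simp add: c_def)
      hence "x \<in> B" by (simp add: B_def)
      moreover have "open B" using oB by (simp add: B_def c_def)
      ultimately obtain e where e: "e > 0" "ball x e \<subseteq> B" using open_contains_ball by blast
      define x' where "x' = x - (e / 2 / norm a) *\<^sub>R a"
      have "dist x x' < e" using e na by (simp add: x'_def dist_norm)
      hence "x' \<in> B" using e by auto
      hence "1 *\<^sub>R (x' - w) = 1 *\<^sub>R (x' - w) \<and> (0::real) < 1 \<and> x' \<in> B" by simp
      hence "1 *\<^sub>R (x' - w) \<in> CB" unfolding CB_def by blast
      hence "a \<bullet> (x' - w) \<ge> 0" using a by simp
      moreover have "a \<bullet> (x' - w) = - (e / 2 / norm a) * (a \<bullet> a)"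
        using ax by (simp add: x'_def inner_diff_right)
      moreover have "(e / 2 / norm a) * (a \<bullet> a) > 0" using e na a(1) by simp
      ultimately show False by linarith
    qed
  qed
  thus ?thesis using a(1) by blast
qed

theorem lemma4:
  fixes M :: "('a::euclidean_space \<times> real) set" and f :: "'a \<Rightarrow> real"
  assumes "IRHS M"
    and "M = {(x, f x) | x. True}"
  shows "\<forall>w. \<exists>H. affine H \<and> aff_dim H = int DIM('a) - 1 \<and> w \<in> H \<and>
                (\<forall>x\<in>H. f x = f w)"
proof
  fix w :: 'a
  have sm: "smooth_submanifold DIM('a) M" using assms(1) by (simp add: IRHS_def)
  have mono: "monotonic_on_line w v f" for w v
  proof -
    obtain g where g: "monotonic_on_line w v g"
      "M \<inter> (line w v \<times> {0..1}) = {(x, g x) | x. x \<in> line w v}"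
    proof -
      have "\<forall>v w. \<exists>g. (\<forall>x\<in>line w v. g x \<in> {0..1}) \<and> monotonic_on_line w v g \<and>
        M \<inter> (line w v \<times> {0..1}) = {(x, g x) | x. x \<in> line w v}"
        using assms(1) unfolding IRHS_def by (elim conjE)
      then obtain g where "monotonic_on_line w v g"
        "M \<inter> (line w v \<times> {0..1}) = {(x, g x) | x. x \<in> line w v}" by meson
      thus ?thesis using that by blast
    qed
    have "g x = f x" if "x \<in> line w v" for x
    proof -
      have "(x, g x) \<in> {(x, g x) | x. x \<in> line w v}" using that by blast
      hence "(x, g x) \<in> M" using g(2) by (metis IntD1)
      thus ?thesis using assms(2) by auto
    qed
    moreover have "w + s *\<^sub>R v \<in> line w v" for s unfolding line_def by blast
    ultimately have eq: "\<And>s. g (w + s *\<^sub>R v) = f (w + s *\<^sub>R v)" by blast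
    show ?thesis using g(1) unfolding monotonic_on_line_def by (simp only: eq)
  qed
  have e1: "f -` {..<f w} = {x. f x < f w}" by auto
  have e2: "f -` {f w<..} = {x. f x > f w}" by auto
  have oA: "open {x. f x < f w}"
    using graph_open_vimage[OF sm assms(2), of "{..<f w}"] e1 by (metis open_lessThan)
  have oB: "open {x. f x > f w}"
    using graph_open_vimage[OF sm assms(2), of "{f w<..}"] e2 by (metis open_greaterThan)
  obtain a where a: "a \<noteq> 0" "\<forall>x. a \<bullet> x = a \<bullet> w \<longrightarrow> f x = f w"
    using core[OF mono oA oB] by blast
  show "\<exists>H. affine H \<and> aff_dim H = int DIM('a) - 1 \<and> w \<in> H \<and> (\<forall>x\<in>H. f x = f w)"
  proof (rule exI[of _ "{x. a \<bullet> x = a \<bullet> w}"], intro conjI)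
    show "affine {x. a \<bullet> x = a \<bullet> w}" by (rule affine_hyperplane)
    show "aff_dim {x. a \<bullet> x = a \<bullet> w} = int DIM('a) - 1" 
    proof -
      have "int (DIM('a) - 1) = int DIM('a) - 1" using DIM_positive[where 'a='a] by linarith
      thus ?thesis using aff_dim_hyperplane[OF a(1), of "a \<bullet> w"] by presburger
    qed
    show "w \<in> {x. a \<bullet> x = a \<bullet> w}" by simp
    show "\<forall>x\<in>{x. a \<bullet> x = a \<bullet> w}. f x = f w" using a(2) by blast
  qed
qed

end
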